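(* For $j\ge 1$ and $1\le p\le n-1$, let $V_{j,p}$ be the subspace of $V^{\otimes n}$ spanned by the basis vectors $\mathbf i$ with $c_p(\mathbf i)\ge j$. If $\mathbf i$ is a basis vector lying in $V_{j,p}$, then $$T_p^{-1}\cdots T_{n-1}^{-1}S_{n-1}\cdots S_p(\mathbf i)\in \mathbf i+V_{j+1,p}.$$
   Context: Let $m,n\ge 1$ and $\mathbb K=\mathbb C(q,Q_1,\dots,Q_m)$, the field of rational functions in indeterminates $q,Q_1,\dots,Q_m$. Fix nonnegative integers $k_1,\dots,k_m,\ell_1,\dots,\ell_m$ with $N=\sum_{c=1}^m(k_c+\ell_c)>0$. Let $V$ be a $\mathbb K$-superspace with homogeneous basis $\{v^{(c)}_a:1\le c\le m,\ 1\le a\le k_c+\ell_c\}$, where $v^{(c)}_a$ is even if $a\le k_c$ and odd if $a>k_c$; $v^{(c)}_a$ has colour $c$. Totally order this basis by $v^{(c)}_a<v^{(c')}_b$ iff $c<c'$, or $c=c'$ and $a<b$, and write it as $u_1<\cdots<u_N$. Let $\bar j\in\{0,1\}$ be the parity of $u_j$ and $\mathrm{col}(j)$ its colour. For $\mathbf i=(i_1,\dots,i_n)\in\{1,\dots,N\}^n$ write also $\mathbf i$ for the basis vector $u_{i_1}\otimes\cdots\otimes u_{i_n}$ of $V^{\otimes n}$, put $c_t(\mathbf i)=\mathrm{col}(i_t)$, and let $\mathbf i s_a$ be $\mathbf i$ with entries $a,a+1$ interchanged. Linear operators on $V^{\otimes n}$ ($1\le a\le n-1$): $s_a(\mathbf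 i)=(-1)^{\bar i_a}\mathbf i$ if $i_a=i_{a+1}$, $s_a(\mathbf i)=(-1)^{\bar i_a\bar i_{a+1}}\mathbf i s_a$ otherwise; $T_a(\mathbf i)=(q-q^{-1})\mathbf i+(-1)^{\bar i_a\bar i_{a+1}}\mathbf i s_a$ if $i_a<i_{a+1}$; $T_a(\mathbf i)=\frac{(q-q^{-1})+(-1)^{\bar i_a}(q+q^{-1})}{2}\mathbf i$ if $i_a=i_{a+1}$; $T_a(\mathbf i)=(-1)^{\bar i_a\bar i_{a+1}}\mathbf i s_a$ if $i_a>i_{a+1}$ (each $T_a$ is invertible); $S_a(\mathbf i)=T_a(\mathbf i)$ if $c_a(\mathbf i)=c_{a+1}(\mathbf i)$, and $S_a(\mathbf i)=s_a(\mathbf i)$ otherwise. Products of operators denote composition. *)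

theory Defs
  imports "HOL-Computational_Algebra.Polynomial" "HOL-Computational_Algebra.Fraction_Field"
begin

text \<open>Ground field: K = C(q), rational functions in q (the parameters Q_c do not
  occur in the operators).\<close>
type_synonym K = "complex poly fract"

definition qq :: K where "qq = Fract [:0, 1:] 1"

text \<open>Vectors of V^{\<otimes>n}: coefficient functions on index tuples
  (lists of length n with entries in {1..N}).\<close>
type_synonym vec = "nat list \<Rightarrow> K"

definition dimN :: "nat \<Rightarrow> (nat \<Rightarrow> nat) \<Rightarrow> (nat \<Rightarrow> nat) \<Rightarrow> nat" where
  "dimN m k l = (\<Sum>c=1..m. k c + l c)"

text \<open>colour of the basis vector u_j (1 \<le> j \<le> N)\<close>
definition col :: "(nat \<Rightarrow> nat) \<Rightarrow> (nat \<Rightarrow> nat) \<Rightarrow> nat \<Rightarrow> nat" where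
  "col k l j = (LEAST c. j \<le> (\<Sum>c'=1..c. k c' + l c'))"

text \<open>parity of u_j: True iff u_j is odd, i.e. u_j = v^{(c)}_a with a > k_c\<close>
definition odd_par :: "(nat \<Rightarrow> nat) \<Rightarrow> (nat \<Rightarrow> nat) \<Rightarrow> nat \<Rightarrow> bool" where
  "odd_par k l j = (j - (\<Sum>c'=1..col k l j - 1. k c' + l c') > k (col k l j))"

definition tuples :: "nat \<Rightarrow> nat \<Rightarrow> nat list set" where
  "tuples N n = {i. length i = n \<and> (\<forall>x\<in>set i. 1 \<le> x \<and> x \<le> N)}"

definition vecs :: "nat \<Rightarrow> nat \<Rightarrow> vec set" where
  "vecs N n = {v. \<forall>i. i \<notin> tuples N n \<longrightarrow> v i = 0}"

definition bvec :: "nat list \<Rightarrow> vec" where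
  "bvec i = (\<lambda>j. if j = i then 1 else 0)"

text \<open>1-based entry access and swapping of entries a, a+1\<close>
definition ent :: "nat list \<Rightarrow> nat \<Rightarrow> nat" where
  "ent i t = i ! (t - 1)"

definition swp :: "nat list \<Rightarrow> nat \<Rightarrow> nat list" where
  "swp i a = i[a - 1 := i ! a, a := i ! (a - 1)]"

definition sgn_pp :: "(nat \<Rightarrow> nat) \<Rightarrow> (nat \<Rightarrow> nat) \<Rightarrow> nat \<Rightarrow> nat \<Rightarrow> K" where
  "sgn_pp k l x y = (if odd_par k l x \<and> odd_par k l y then -1 else 1)"

definition sgn_p :: "(nat \<Rightarrow> nat) \<Rightarrow> (nat \<Rightarrow> nat) \<Rightarrow> nat \<Rightarrow> K" where
  "sgn_p k l x = (if odd_par k l x then -1 else 1)"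

definition s_b :: "(nat \<Rightarrow> nat) \<Rightarrow> (nat \<Rightarrow> nat) \<Rightarrow> nat \<Rightarrow> nat list \<Rightarrow> vec" where
  "s_b k l a i j =
     (if ent i a = ent i (a+1) then sgn_p k l (ent i a) * bvec i j
      else sgn_pp k l (ent i a) (ent i (a+1)) * bvec (swp i a) j)"

definition T_b :: "(nat \<Rightarrow> nat) \<Rightarrow> (nat \<Rightarrow> nat) \<Rightarrow> nat \<Rightarrow> nat list \<Rightarrow> vec" where
  "T_b k l a i j =
     (if ent i a < ent i (a+1) then
        (qq - inverse qq) * bvec i j + sgn_pp k l (ent i a) (ent i (a+1)) * bvec (swp i a) j
      else if ent i a = ent i (a+1) then
        ((qq - inverse qq) + sgn_p k l (ent i a) * (qq + inverse qq)) / 2 * bvec i j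
      else sgn_pp k l (ent i a) (ent i (a+1)) * bvec (swp i a) j)"

definition S_b :: "(nat \<Rightarrow> nat) \<Rightarrow> (nat \<Rightarrow> nat) \<Rightarrow> nat \<Rightarrow> nat list \<Rightarrow> vec" where
  "S_b k l a i = (if col k l (ent i a) = col k l (ent i (a+1)) then T_b k l a i else s_b k l a i)"

definition lin :: "nat \<Rightarrow> nat \<Rightarrow> (nat list \<Rightarrow> vec) \<Rightarrow> vec \<Rightarrow> vec" where
  "lin N n f v = (\<lambda>j. \<Sum>i\<in>tuples N n. v i * f i j)"

definition T_op :: "nat \<Rightarrow> (nat \<Rightarrow> nat) \<Rightarrow> (nat \<Rightarrow> nat) \<Rightarrow> nat \<Rightarrow> nat \<Rightarrow> vec \<Rightarrow> vec" where
  "T_op m k l n a = lin (dimN m k l) n (T_b k l a)"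

definition S_op :: "nat \<Rightarrow> (nat \<Rightarrow> nat) \<Rightarrow> (nat \<Rightarrow> nat) \<Rightarrow> nat \<Rightarrow> nat \<Rightarrow> vec \<Rightarrow> vec" where
  "S_op m k l n a = lin (dimN m k l) n (S_b k l a)"

definition Tinv_op :: "nat \<Rightarrow> (nat \<Rightarrow> nat) \<Rightarrow> (nat \<Rightarrow> nat) \<Rightarrow> nat \<Rightarrow> nat \<Rightarrow> vec \<Rightarrow> vec" where
  "Tinv_op m k l n a = inv_into (vecs (dimN m k l) n) (T_op m k l n a)"

definition Vjp :: "nat \<Rightarrow> (nat \<Rightarrow> nat) \<Rightarrow> (nat \<Rightarrow> nat) \<Rightarrow> nat \<Rightarrow> nat \<Rightarrow> nat \<Rightarrow> vec set" where
  "Vjp m k l n j p = {v \<in> vecs (dimN m k l) n. \<forall>i. v i \<noteq> 0 \<longrightarrow> col k l (ent i p) \<ge> j}"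

end

theory Submission
  imports Defs
begin


lemma two_nz: "(2::K) \<noteq> 0"
proof
  assume h: "(2::K) = 0"
  have "(2::K) = Fract (of_nat 2) 1" by (metis of_nat_fract of_nat_numeral)
  with h have "Fract (2::complex poly) 1 = Fract 0 1" by (simp add: Zero_fract_def)
  then show False by (simp add: eq_fract)
qed

lemma qq_nz: "qq \<noteq> 0"
  by (simp add: qq_def Zero_fract_def eq_fract)

lemma finite_tuples: "finite (tuples N n)"
proof -
  have "tuples N n \<subseteq> {xs. set xs \<subseteq> {1..N} \<and> length xs = n}"
    by (auto simp: tuples_def)
  moreover have "finite {xs. set xs \<subseteq> {1..N} \<and> length xs = n}"
    by (rule finite_lists_length_eq) simp
  ultimately show ?thesis by (rule finite_subset)
qed

lemma swp_len [simp]: "length (swp i a) = length i"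
  by (simp add: swp_def)

lemma swp_ent1: "1 \<le> a \<Longrightarrow> a < length i \<Longrightarrow> ent (swp i a) a = ent i (a+1)"
  by (simp add: swp_def ent_def nth_list_update)

lemma swp_ent2: "1 \<le> a \<Longrightarrow> a < length i \<Longrightarrow> ent (swp i a) (a+1) = ent i a"
  by (simp add: swp_def ent_def nth_list_update)

lemma swp_swp: "1 \<le> a \<Longrightarrow> a < length i \<Longrightarrow> swp (swp i a) a = i"
  by (rule nth_equalityI) (auto simp: swp_def nth_list_update)

lemma swp_eq: "1 \<le> a \<Longrightarrow> a < length i \<Longrightarrow> ent i a = ent i (a+1) \<Longrightarrow> swp i a = i"
  by (rule nth_equalityI) (auto simp: swp_def ent_def nth_list_update)

lemma swp_tuples: "1 \<le> a \<Longrightarrow> a < n \<Longrightarrow> i \<in> tuples N n \<Longrightarrow> swp i a \<in> tuples N n"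
proof -
  assume h: "1 \<le> a" "a < n" "i \<in> tuples N n"
  have s1: "set (swp i a) \<subseteq> insert (i ! (a-1)) (insert (i ! a) (set i))"
    unfolding swp_def
    by (meson dual_order.trans insert_mono set_update_subset_insert)
  have "i ! (a-1) \<in> set i" "i ! a \<in> set i" using h by (auto simp: tuples_def)
  with s1 have "set (swp i a) \<subseteq> set i" by auto
  with h show ?thesis by (auto simp: tuples_def)
qed

lemma lin_bvec: "y \<in> tuples N n \<Longrightarrow> lin N n f (bvec y) = f y"
proof
  fix j assume "y \<in> tuples N n"
  then show "lin N n f (bvec y) j = f y j"
    unfolding lin_def bvec_def
    by (simp add: if_distrib[where f="\<lambda>x. x * _"] sum.If_cases finite_tuples)
qed

lemma lin_add: "lin N n f (\<lambda>j. v j + w j) = (\<lambda>j. lin N n f v j + lin N n f w j)"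
  by (simp add: lin_def sum.distrib distrib_right)

lemma lin_diff: "lin N n f (\<lambda>j. v j - w j) = (\<lambda>j. lin N n f v j - lin N n f w j)"
  by (simp add: lin_def sum_subtractf left_diff_distrib)

lemma lin_smult: "lin N n f (\<lambda>j. c * v j) = (\<lambda>j. c * lin N n f v j)"
  by (simp add: lin_def sum_distrib_left mult.assoc)

lemma lin_fdiff: "lin N n (\<lambda>x j. f x j - g x j) v = (\<lambda>j. lin N n f v j - lin N n g v j)"
  by (simp add: lin_def sum_subtractf right_diff_distrib)

lemma lin_cong: "(\<And>x. x \<in> tuples N n \<Longrightarrow> f x = g x) \<Longrightarrow> lin N n f v = lin N n g v"
  by (simp add: lin_def)

lemma lin_id: "v \<in> vecs N n \<Longrightarrow> lin N n bvec v = v"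
proof
  fix j assume v: "v \<in> vecs N n"
  show "lin N n bvec v j = v j"
  proof (cases "j \<in> tuples N n")
    case True
    then show ?thesis unfolding lin_def bvec_def
      by (simp add: if_distrib[where f="\<lambda>x. _ * x"] sum.If_cases finite_tuples)
  next
    case False
    then show ?thesis using v unfolding lin_def bvec_def vecs_def by (auto intro!: sum.neutral)
  qed
qed

lemma lin_comp: "lin N n g (lin N n f v) = lin N n (\<lambda>x. lin N n g (f x)) v"
proof
  fix j
  have "lin N n g (lin N n f v) j = (\<Sum>y\<in>tuples N n. \<Sum>x\<in>tuples N n. v x * f x y * g y j)"
    by (simp add: lin_def sum_distrib_right)
  also have "\<dots> = (\<Sum>x\<in>tuples N n. \<Sum>y\<in>tuples N n. v x * f x y * g y j)"
    by (rule sum.swap)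
  also have "\<dots> = lin N n (\<lambda>x. lin N n g (f x)) v j"
    by (simp add: lin_def sum_distrib_left mult.assoc)
  finally show "lin N n g (lin N n f v) j = lin N n (\<lambda>x. lin N n g (f x)) v j" .
qed

lemma lin_vecs: "(\<And>x. x \<in> tuples N n \<Longrightarrow> v x \<noteq> 0 \<Longrightarrow> f x \<in> vecs N n) \<Longrightarrow> lin N n f v \<in> vecs N n"
  unfolding vecs_def lin_def
  by (auto intro!: sum.neutral) (metis mult_not_zero)

lemma lin_supp: "(\<And>x y. x \<in> tuples N n \<Longrightarrow> v x \<noteq> 0 \<Longrightarrow> f x y \<noteq> 0 \<Longrightarrow> Q y) \<Longrightarrow>
   lin N n f v y \<noteq> 0 \<Longrightarrow> Q y"
  unfolding lin_def
  by (metis (no_types, lifting) mult_not_zero sum.neutral)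

lemma col_mono:
  assumes "x \<le> y" "y \<le> dimN m k l"
  shows "col k l x \<le> col k l y"
proof -
  have "y \<le> (\<Sum>c'=1..m. k c' + l c')" using assms by (simp add: dimN_def)
  then have "y \<le> (\<Sum>c'=1..col k l y. k c' + l c')"
    unfolding col_def by (rule LeastI)
  then have "x \<le> (\<Sum>c'=1..col k l y. k c' + l c')" using assms by simp
  then show ?thesis unfolding col_def by (rule Least_le)
qed

lemma sgn_pp_sq: "sgn_pp k l x y * sgn_pp k l y x = 1"
  by (auto simp: sgn_pp_def)

lemma sgn_p_sq: "sgn_p k l x * sgn_p k l x = 1"
  by (auto simp: sgn_p_def)


definition Ti_b :: "(nat \<Rightarrow> nat) \<Rightarrow> (nat \<Rightarrow> nat) \<Rightarrow> nat \<Rightarrow> nat list \<Rightarrow> vec" where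
  "Ti_b k l a i j =
     (if ent i a < ent i (a+1) then sgn_pp k l (ent i a) (ent i (a+1)) * bvec (swp i a) j
      else if ent i a = ent i (a+1) then
        ((inverse qq - qq) + sgn_p k l (ent i a) * (qq + inverse qq)) / 2 * bvec i j
      else sgn_pp k l (ent i a) (ent i (a+1)) * bvec (swp i a) j - (qq - inverse qq) * bvec i j)"

lemma lam_mu:
  assumes "s * s = (1::K)"
  shows "((qq - inverse qq) + s * (qq + inverse qq)) / 2 * (((inverse qq - qq) + s * (qq + inverse qq)) / 2) = 1"
proof -
  have q: "qq * inverse qq = 1" using qq_nz by simp
  have "((qq - inverse qq) + s * (qq + inverse qq)) * (((inverse qq - qq) + s * (qq + inverse qq)))
      = (s*s) * (qq + inverse qq) * (qq + inverse qq) - (qq - inverse qq) * (qq - inverse qq)"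
    by (simp add: algebra_simps)
  also have "\<dots> = 4 * (qq * inverse qq)" using assms by (simp add: algebra_simps)
  also have "\<dots> = 4" using q by simp
  finally have XY: "((qq - inverse qq) + s * (qq + inverse qq)) * (((inverse qq - qq) + s * (qq + inverse qq))) = 4" .
  have f: "(4::K) \<noteq> 0" using two_nz by (metis mult_2_right mult_eq_0_iff numeral_Bit0)
  have "((qq - inverse qq) + s * (qq + inverse qq)) / 2 * (((inverse qq - qq) + s * (qq + inverse qq)) / 2)
     = (((qq - inverse qq) + s * (qq + inverse qq)) * (((inverse qq - qq) + s * (qq + inverse qq)))) / 4"
    by simp
  then show ?thesis using XY f by simp
qed

lemma T_lt: "ent x a < ent x (a+1) \<Longrightarrow> T_b k l a x =
   (\<lambda>j. (qq - inverse qq) * bvec x j + sgn_pp k l (ent x a) (ent x (a+1)) * bvec (swp x a) j)"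
  by (rule ext) (simp add: T_b_def)

lemma T_eq: "ent x a = ent x (a+1) \<Longrightarrow> T_b k l a x =
   (\<lambda>j. ((qq - inverse qq) + sgn_p k l (ent x a) * (qq + inverse qq)) / 2 * bvec x j)"
  by (rule ext) (simp add: T_b_def)

lemma T_gt: "ent x a > ent x (a+1) \<Longrightarrow> T_b k l a x =
   (\<lambda>j. sgn_pp k l (ent x a) (ent x (a+1)) * bvec (swp x a) j)"
  by (rule ext) (simp add: T_b_def)

lemma Ti_lt: "ent x a < ent x (a+1) \<Longrightarrow> Ti_b k l a x =
   (\<lambda>j. sgn_pp k l (ent x a) (ent x (a+1)) * bvec (swp x a) j)"
  by (rule ext) (simp add: Ti_b_def)

lemma Ti_eq: "ent x a = ent x (a+1) \<Longrightarrow> Ti_b k l a x =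
   (\<lambda>j. ((inverse qq - qq) + sgn_p k l (ent x a) * (qq + inverse qq)) / 2 * bvec x j)"
  by (rule ext) (simp add: Ti_b_def)

lemma Ti_gt: "ent x a > ent x (a+1) \<Longrightarrow> Ti_b k l a x =
   (\<lambda>j. sgn_pp k l (ent x a) (ent x (a+1)) * bvec (swp x a) j - (qq - inverse qq) * bvec x j)"
  by (rule ext) (simp add: Ti_b_def)

lemma swp_ne: "1 \<le> a \<Longrightarrow> a < length x \<Longrightarrow> ent x a \<noteq> ent x (a+1) \<Longrightarrow> swp x a \<noteq> x"
  using swp_ent1 by metis

lemma T_Ti:
  assumes x: "x \<in> tuples N n" and a: "1 \<le> a" "a < n"
  shows "lin N n (T_b k l a) (Ti_b k l a x) = bvec x"
proof -
  have len: "a < length x" using x a by (simp add: tuples_def)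
  have sx: "swp x a \<in> tuples N n" using swp_tuples x a by blast
  note e1 = swp_ent1[OF a(1) len] and e2 = swp_ent2[OF a(1) len] and ss = swp_swp[OF a(1) len]
  consider "ent x a < ent x (a+1)" | "ent x a = ent x (a+1)" | "ent x a > ent x (a+1)" by linarith
  then show ?thesis
  proof cases
    case 1
    then show ?thesis
      using sgn_pp_sq[of k l "ent x a" "ent x (a+1)"]
      by (simp add: Ti_lt lin_smult lin_bvec sx T_gt e1 e2 ss mult.assoc[symmetric] del: One_nat_def)
  next
    case 2
    define lam where "lam = ((qq - inverse qq) + sgn_p k l (ent x a) * (qq + inverse qq)) / 2"
    define mu where "mu = ((inverse qq - qq) + sgn_p k l (ent x a) * (qq + inverse qq)) / 2"
    have lm: "lam * mu = 1" unfolding lam_def mu_def by (rule lam_mu[OF sgn_p_sq])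
    have "lin N n (T_b k l a) (Ti_b k l a x) = lin N n (T_b k l a) (\<lambda>j. mu * bvec x j)"
      using 2 by (simp add: Ti_eq mu_def)
    also have "\<dots> = (\<lambda>j. mu * T_b k l a x j)" by (simp add: lin_smult lin_bvec x)
    also have "\<dots> = (\<lambda>j. (lam * mu) * bvec x j)" using 2 by (simp add: T_eq lam_def algebra_simps)
    finally show ?thesis using lm by simp
  next
    case 3
    have ne: "swp x a \<noteq> x" using swp_ne[OF a(1) len] 3 by simp
    show ?thesis
      using 3 sgn_pp_sq[of k l "ent x a" "ent x (a+1)"] ne
      apply (simp add: Ti_gt lin_smult lin_diff lin_bvec sx x T_gt T_lt e1 e2 ss del: One_nat_def)
      apply (rule ext)
      apply (simp add: bvec_def algebra_simps)
      done
  qed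
qed

lemma Ti_T:
  assumes x: "x \<in> tuples N n" and a: "1 \<le> a" "a < n"
  shows "lin N n (Ti_b k l a) (T_b k l a x) = bvec x"
proof -
  have len: "a < length x" using x a by (simp add: tuples_def)
  have sx: "swp x a \<in> tuples N n" using swp_tuples x a by blast
  note e1 = swp_ent1[OF a(1) len] and e2 = swp_ent2[OF a(1) len] and ss = swp_swp[OF a(1) len]
  consider "ent x a < ent x (a+1)" | "ent x a = ent x (a+1)" | "ent x a > ent x (a+1)" by linarith
  then show ?thesis
  proof cases
    case 1
    have ne: "swp x a \<noteq> x" using swp_ne[OF a(1) len] 1 by simp
    show ?thesis
      using 1 sgn_pp_sq[of k l "ent x a" "ent x (a+1)"] ne
      apply (simp add: Ti_lt Ti_gt lin_smult lin_add lin_bvec sx x T_lt e1 e2 ss del: One_nat_def)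
      apply (rule ext)
      apply (simp add: bvec_def algebra_simps)
      done
  next
    case 2
    define lam where "lam = ((qq - inverse qq) + sgn_p k l (ent x a) * (qq + inverse qq)) / 2"
    define mu where "mu = ((inverse qq - qq) + sgn_p k l (ent x a) * (qq + inverse qq)) / 2"
    have lm: "lam * mu = 1" unfolding lam_def mu_def by (rule lam_mu[OF sgn_p_sq])
    have "lin N n (Ti_b k l a) (T_b k l a x) = lin N n (Ti_b k l a) (\<lambda>j. lam * bvec x j)"
      using 2 by (simp add: T_eq lam_def)
    also have "\<dots> = (\<lambda>j. lam * Ti_b k l a x j)" by (simp add: lin_smult lin_bvec x)
    also have "\<dots> = (\<lambda>j. (lam * mu) * bvec x j)" using 2 by (simp add: Ti_eq mu_def algebra_simps)
    finally show ?thesis using lm by simp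
  next
    case 3
    then show ?thesis
      using sgn_pp_sq[of k l "ent x a" "ent x (a+1)"]
      by (simp add: Ti_lt lin_smult lin_bvec sx T_gt e1 e2 ss mult.assoc[symmetric] del: One_nat_def)
  qed
qed


lemma Ti_supp: "Ti_b k l a x y \<noteq> 0 \<Longrightarrow> (y = x \<and> ent x (a+1) \<le> ent x a) \<or> y = swp x a"
  by (auto simp: Ti_b_def bvec_def split: if_splits)

lemma T_supp: "T_b k l a x y \<noteq> 0 \<Longrightarrow> y = x \<or> y = swp x a"
  by (auto simp: T_b_def bvec_def split: if_splits)

lemma S_supp: "S_b k l a x y \<noteq> 0 \<Longrightarrow> (y = x \<and> col k l (ent x a) = col k l (ent x (a+1))) \<or> y = swp x a"
  by (auto simp: S_b_def s_b_def T_b_def bvec_def split: if_splits)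

lemma Ti_vecs: "x \<in> tuples N n \<Longrightarrow> 1 \<le> a \<Longrightarrow> a < n \<Longrightarrow> Ti_b k l a x \<in> vecs N n"
  unfolding vecs_def using Ti_supp swp_tuples by blast

lemma T_vecs: "x \<in> tuples N n \<Longrightarrow> 1 \<le> a \<Longrightarrow> a < n \<Longrightarrow> T_b k l a x \<in> vecs N n"
  unfolding vecs_def using T_supp swp_tuples by blast

lemma S_vecs: "x \<in> tuples N n \<Longrightarrow> 1 \<le> a \<Longrightarrow> a < n \<Longrightarrow> S_b k l a x \<in> vecs N n"
  unfolding vecs_def using S_supp swp_tuples by blast

lemma bvec_vecs: "x \<in> tuples N n \<Longrightarrow> bvec x \<in> vecs N n"
  by (auto simp: vecs_def bvec_def)

lemma LTi_vecs: "1 \<le> a \<Longrightarrow> a < n \<Longrightarrow> lin N n (Ti_b k l a) v \<in> vecs N n"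
  by (rule lin_vecs) (rule Ti_vecs)

lemma Tinv_eq:
  assumes v: "v \<in> vecs (dimN m k l) n" and a: "1 \<le> a" "a < n"
  shows "Tinv_op m k l n a v = lin (dimN m k l) n (Ti_b k l a) v"
proof -
  let ?N = "dimN m k l"
  let ?T = "T_op m k l n a"
  let ?L = "lin ?N n (Ti_b k l a)"
  have T: "?T = lin ?N n (T_b k l a)" by (simp add: T_op_def)
  have left: "?L (?T x) = x" if "x \<in> vecs ?N n" for x
  proof -
    have "?L (?T x) = lin ?N n (\<lambda>y. ?L (T_b k l a y)) x" by (simp add: T lin_comp)
    also have "\<dots> = lin ?N n bvec x" by (rule lin_cong) (rule Ti_T[OF _ a])
    also have "\<dots> = x" using that by (rule lin_id)
    finally show ?thesis .
  qed
  have right: "?T (?L v) = v"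
  proof -
    have "?T (?L v) = lin ?N n (\<lambda>y. lin ?N n (T_b k l a) (Ti_b k l a y)) v" by (simp add: T lin_comp)
    also have "\<dots> = lin ?N n bvec v" by (rule lin_cong) (rule T_Ti[OF _ a])
    also have "\<dots> = v" using v by (rule lin_id)
    finally show ?thesis .
  qed
  have inj: "inj_on ?T (vecs ?N n)"
    by (rule inj_onI) (metis left)
  have "Tinv_op m k l n a v = inv_into (vecs ?N n) ?T (?T (?L v))"
    by (simp add: Tinv_op_def right)
  also have "\<dots> = ?L v"
    by (rule inv_into_f_f[OF inj]) (rule LTi_vecs[OF a])
  finally show ?thesis .
qed

lemma fold_Tinv:
  "(\<forall>a\<in>set as. 1 \<le> a \<and> a < n) \<Longrightarrow> v \<in> vecs (dimN m k l) n \<Longrightarrow>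
   fold (\<lambda>a w. Tinv_op m k l n a w) as v = fold (\<lambda>a w. lin (dimN m k l) n (Ti_b k l a) w) as v"
proof (induction as arbitrary: v)
  case Nil
  then show ?case by simp
next
  case (Cons a as)
  then show ?case by (simp add: Tinv_eq LTi_vecs)
qed

lemma fold_lin_diff:
  "fold (\<lambda>a w. lin N n (f a) w) as (\<lambda>j. v j - w j) =
   (\<lambda>j. fold (\<lambda>a w. lin N n (f a) w) as v j - fold (\<lambda>a w. lin N n (f a) w) as w j)"
proof (induction as arbitrary: v w)
  case Nil
  then show ?case by simp
next
  case (Cons a as)
  then show ?case by (simp add: lin_diff)
qed

lemma ent_le:
  assumes "x \<in> tuples N n" "1 \<le> a" "a \<le> n"
  shows "ent x a \<le> N" "1 \<le> ent x a"
proof -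
  have "x ! (a - 1) \<in> set x" using assms by (auto simp: tuples_def intro!: nth_mem)
  then show "ent x a \<le> N" "1 \<le> ent x a" using assms by (auto simp: tuples_def ent_def)
qed

lemma S_form:
  assumes x: "x \<in> tuples (dimN m k l) n" and a: "1 \<le> a" "a < n"
  shows "S_b k l a x = (if col k l (ent x a) < col k l (ent x (a+1))
           then (\<lambda>j. T_b k l a x j - (qq - inverse qq) * bvec x j) else T_b k l a x)"
proof -
  have b1: "ent x a \<le> dimN m k l" using ent_le[OF x a(1)] a by simp
  have b2: "ent x (a+1) \<le> dimN m k l" using ent_le[OF x, of "a+1"] a by simp
  consider "col k l (ent x a) = col k l (ent x (a+1))"
    | "col k l (ent x a) < col k l (ent x (a+1))"
    | "col k l (ent x a) > col k l (ent x (a+1))" by linarith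
  then show ?thesis
  proof cases
    case 1
    then show ?thesis by (simp add: S_b_def)
  next
    case 2
    then have "ent x a < ent x (a+1)" using col_mono[OF _ b1, of "ent x (a+1)"] by (meson not_le le_less_trans less_le_not_le)
    then show ?thesis using 2 by (auto simp: S_b_def s_b_def T_lt)
  next
    case 3
    then have "ent x a > ent x (a+1)" using col_mono[OF _ b2, of "ent x a"] by (meson not_le le_less_trans less_le_not_le)
    then show ?thesis using 3 by (auto simp: S_b_def s_b_def T_gt)
  qed
qed

lemma D_supp:
  assumes x: "x \<in> tuples (dimN m k l) n" and a: "1 \<le> a" "a < n"
    and ne: "lin (dimN m k l) n (Ti_b k l a) (S_b k l a x) y - bvec x y \<noteq> 0"
  shows "col k l (ent x a) < col k l (ent x (a+1)) \<and> y = swp x a"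
proof -
  let ?N = "dimN m k l"
  have LT: "lin ?N n (Ti_b k l a) (T_b k l a x) = bvec x" by (rule Ti_T[OF x a])
  show ?thesis
  proof (cases "col k l (ent x a) < col k l (ent x (a+1))")
    case False
    then show ?thesis using ne LT by (simp add: S_form[OF x a])
  next
    case True
    have b1: "ent x a \<le> dimN m k l" using ent_le[OF x a(1)] a by simp
    have lt: "ent x a < ent x (a+1)" using True col_mono[OF _ b1, of "ent x (a+1)"] by (meson not_le le_less_trans less_le_not_le)
    have "lin ?N n (Ti_b k l a) (S_b k l a x) y - bvec x y = - (qq - inverse qq) * Ti_b k l a x y"
    proof -
      have "S_b k l a x = (\<lambda>j. T_b k l a x j - (qq - inverse qq) * bvec x j)"
        using True by (simp add: S_form[OF x a])
      then have "lin ?N n (Ti_b k l a) (S_b k l a x) =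
          (\<lambda>j. lin ?N n (Ti_b k l a) (T_b k l a x) j - (qq - inverse qq) * lin ?N n (Ti_b k l a) (bvec x) j)"
        by (simp only: lin_diff lin_smult)
      then show ?thesis by (simp add: LT lin_bvec x algebra_simps)
    qed
    with ne have "Ti_b k l a x y \<noteq> 0" by auto
    then have "y = swp x a" using lt by (simp add: Ti_lt bvec_def split: if_splits)
    then show ?thesis using True by simp
  qed
qed


theorem mainTheorem2:
  fixes m n :: nat and k l :: "nat \<Rightarrow> nat" and j p :: nat and i :: "nat list"
  assumes "m \<ge> 1" and "n \<ge> 1" and "dimN m k l > 0"
    and "j \<ge> 1" and "1 \<le> p" and "p \<le> n - 1"
    and "i \<in> tuples (dimN m k l) n"
    and "bvec i \<in> Vjp m k l n j p"
  shows "fold (\<lambda>a w. Tinv_op m k l n a w) (rev [p..<n])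
           (fold (\<lambda>a w. S_op m k l n a w) [p..<n] (bvec i)) - bvec i
         \<in> Vjp m k l n (j + 1) p"
proof -
  define N where "N = dimN m k l"
  define c0 where "c0 = col k l (ent i p)"
  define W where "W b = fold (\<lambda>a w. S_op m k l n a w) [p..<b] (bvec i)" for b
  define Uf where "Uf b v = fold (\<lambda>a w. lin N n (Ti_b k l a) w) (rev [p..<b]) v" for b v
  define G where "G a = {v \<in> vecs N n. \<forall>x. v x \<noteq> 0 \<longrightarrow> c0 < col k l (ent x a)}" for a
  have p1: "1 \<le> p" and pn: "p < n" using assms by auto
  have i: "i \<in> tuples N n" using assms by (simp add: N_def)
  have jc: "j \<le> c0"
    using assms(8) by (auto simp: Vjp_def bvec_def c0_def)
  have Wsuc: "W (Suc b) = S_op m k l n b (W b)" if "p \<le> b" for b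
    using that by (simp add: W_def)
  have Usuc: "Uf (Suc b) v = Uf b (lin N n (Ti_b k l b) v)" if "p \<le> b" for b v
    using that by (simp add: Uf_def)
  have Sop: "S_op m k l n a = lin N n (S_b k l a)" for a by (simp add: S_op_def N_def)
  have Winv: "W b \<in> vecs N n \<and> (\<forall>x. W b x \<noteq> 0 \<longrightarrow> col k l (ent x b) = c0)" if "p \<le> b" "b \<le> n" for b
    using that
  proof (induction b rule: dec_induct)
    case base
    then show ?case using i bvec_vecs[OF i] by (auto simp: W_def c0_def bvec_def)
  next
    case (step b)
    have b1: "1 \<le> b" "b < n" using step p1 by auto
    have IH: "W b \<in> vecs N n" "\<And>x. W b x \<noteq> 0 \<Longrightarrow> col k l (ent x b) = c0" using step by auto
    have eq: "W (Suc b) = lin N n (S_b k l b) (W b)" using Wsuc[OF step(1)] Sop by simp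
    have v: "W (Suc b) \<in> vecs N n" unfolding eq by (rule lin_vecs) (rule S_vecs[OF _ b1])
    have s: "col k l (ent y (Suc b)) = c0" if "W (Suc b) y \<noteq> 0" for y
    proof -
      have "lin N n (S_b k l b) (W b) y \<noteq> 0" using that eq by simp
      then show ?thesis
      proof (rule lin_supp[where Q = "\<lambda>y. col k l (ent y (Suc b)) = c0", rotated])
        fix x y assume x: "x \<in> tuples N n" and wx: "W b x \<noteq> 0" and sy: "S_b k l b x y \<noteq> 0"
        have len: "b < length x" using x b1 by (simp add: tuples_def)
        from S_supp[OF sy] show "col k l (ent y (Suc b)) = c0"
          using IH(2)[OF wx] swp_ent2[OF b1(1) len] by auto
      qed
    qed
    show ?case using v s by simp
  qed
  have Ufinv: "\<forall>v. v \<in> G b \<longrightarrow> Uf b v \<in> G p" if "p \<le> b" "b \<le> n" for b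
    using that
  proof (induction b rule: dec_induct)
    case base
    then show ?case by (simp add: Uf_def)
  next
    case (step b)
    have b1: "1 \<le> b" "b < n" using step p1 by auto
    show ?case
    proof (intro allI impI)
      fix v assume v: "v \<in> G (Suc b)"
      have "lin N n (Ti_b k l b) v \<in> G b"
        unfolding G_def
      proof (intro CollectI conjI allI impI)
        show "lin N n (Ti_b k l b) v \<in> vecs N n" by (rule LTi_vecs[OF b1])
        fix y assume "lin N n (Ti_b k l b) v y \<noteq> 0"
        then show "c0 < col k l (ent y b)"
        proof (rule lin_supp[where Q = "\<lambda>y. c0 < col k l (ent y b)", rotated])
          fix x y assume x: "x \<in> tuples N n" and vx: "v x \<noteq> 0" and ty: "Ti_b k l b x y \<noteq> 0"
          have len: "b < length x" using x b1 by (simp add: tuples_def)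
          have cx: "c0 < col k l (ent x (Suc b))" using v vx by (simp add: G_def)
          have bd: "ent x b \<le> dimN m k l" using ent_le[OF x b1(1)] b1 by (simp add: N_def)
          from Ti_supp[OF ty] show "c0 < col k l (ent y b)"
          proof
            assume "y = x \<and> ent x (b+1) \<le> ent x b"
            then show ?thesis using col_mono[OF _ bd, of "ent x (b+1)"] cx by auto
          next
            assume "y = swp x b"
            then show ?thesis using swp_ent1[OF b1(1) len] cx by simp
          qed
        qed
      qed
      then show "Uf (Suc b) v \<in> G p" using step Usuc by simp
    qed
  qed
  have Gp_add: "(\<lambda>j. u j + w j) \<in> G p" if "u \<in> G p" "w \<in> G p" for u w
    using that unfolding G_def vecs_def by (smt (verit) add.right_neutral mem_Collect_eq)
  have Phi: "(\<lambda>j. Uf b (W b) j - bvec i j) \<in> G p" if "p \<le> b" "b \<le> n" for b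
    using that
  proof (induction b rule: dec_induct)
    case base
    then show ?case by (simp add: Uf_def W_def G_def vecs_def)
  next
    case (step b)
    have b1: "1 \<le> b" "b < n" using step p1 by auto
    have Wb: "W b \<in> vecs N n" "\<And>x. W b x \<noteq> 0 \<Longrightarrow> col k l (ent x b) = c0" using Winv step by auto
    define D where "D = (\<lambda>j. lin N n (Ti_b k l b) (W (Suc b)) j - W b j)"
    have DG: "D \<in> G b"
      unfolding G_def
    proof (intro CollectI conjI allI impI)
      show "D \<in> vecs N n" using LTi_vecs[OF b1] Wb(1) by (auto simp: D_def vecs_def)
      have D': "D = lin N n (\<lambda>x j. lin N n (Ti_b k l b) (S_b k l b x) j - bvec x j) (W b)"
        by (simp add: D_def Wsuc[OF step(1)] Sop lin_comp lin_fdiff lin_id[OF Wb(1)])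
      fix y assume "D y \<noteq> 0"
      then have "lin N n (\<lambda>x j. lin N n (Ti_b k l b) (S_b k l b x) j - bvec x j) (W b) y \<noteq> 0"
        using D' by simp
      then show "c0 < col k l (ent y b)"
      proof (rule lin_supp[where Q = "\<lambda>y. c0 < col k l (ent y b)", rotated])
        fix x y assume x: "x \<in> tuples N n" and wx: "W b x \<noteq> 0"
          and dy: "lin N n (Ti_b k l b) (S_b k l b x) y - bvec x y \<noteq> 0"
        have len: "b < length x" using x b1 by (simp add: tuples_def)
        have "col k l (ent x b) < col k l (ent x (b+1)) \<and> y = swp x b"
          using D_supp[OF x[unfolded N_def] b1 dy[unfolded N_def]] .
        then show "c0 < col k l (ent y b)" using Wb(2)[OF wx] swp_ent1[OF b1(1) len] by auto
      qed
    qed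
    have "Uf b D \<in> G p" using Ufinv[of b] step DG by auto
    moreover have "Uf b D = (\<lambda>j. Uf (Suc b) (W (Suc b)) j - Uf b (W b) j)"
    proof -
      have "Uf b D = (\<lambda>j. Uf b (lin N n (Ti_b k l b) (W (Suc b))) j - Uf b (W b) j)"
        unfolding D_def Uf_def by (rule fold_lin_diff)
      then show ?thesis using Usuc[OF step(1)] by simp
    qed
    ultimately have "(\<lambda>j. Uf (Suc b) (W (Suc b)) j - Uf b (W b) j) \<in> G p" by simp
    moreover have "(\<lambda>j. Uf b (W b) j - bvec i j) \<in> G p" using step b1 by simp
    ultimately have "(\<lambda>j. (Uf (Suc b) (W (Suc b)) j - Uf b (W b) j) + (Uf b (W b) j - bvec i j)) \<in> G p"
      by (rule Gp_add)
    then show ?case by simp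
  qed
  have fin: "(\<lambda>j. Uf n (W n) j - bvec i j) \<in> G p" using Phi[of n] pn by simp
  have "fold (\<lambda>a w. Tinv_op m k l n a w) (rev [p..<n]) (W n) = Uf n (W n)"
    unfolding Uf_def N_def
    by (rule fold_Tinv) (use p1 Winv[of n] pn in \<open>auto simp: N_def\<close>)
  then have eq: "fold (\<lambda>a w. Tinv_op m k l n a w) (rev [p..<n])
           (fold (\<lambda>a w. S_op m k l n a w) [p..<n] (bvec i)) - bvec i = (\<lambda>j. Uf n (W n) j - bvec i j)"
    by (simp add: W_def fun_diff_def)
  show ?thesis unfolding eq using fin jc by (auto simp: G_def Vjp_def N_def)
qed

end
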